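(* Let $D$ be a delta-matroid on $[n,\overline{n}]$ with feasible sets $\mathcal{F}$, let $S\in\operatorname{AdS}_n$ with $|S|=n$, and let $r=\max_{B\in\mathcal{F}}|S\cap B|$. Let $M$ be the matroid on $S$ whose set of bases is $\{S\cap B:B\in\mathcal{F},\ |S\cap B|=r\}$. Then for every $T\subseteq S$, $$\operatorname{rk}_M(T)=\frac{g_D(T)+|T|}{2}.$$
   Context: Let $[n,\overline{n}]=\{1,\dots,n,\overline{1},\dots,\overline{n}\}$ with involution $a\mapsto\overline{a}$; $\overline{S}=\{\overline{a}:a\in S\}$. A subset is admissible if it contains at most one of $i,\overline{i}$ for each $i$; $\operatorname{AdS}_n$ is the set of admissible subsets. In $\mathbb{R}^n$ set $e_{\overline{i}}=-e_i$, $e_S=\sum_{a\in S}e_a$. A delta-matroid $D$ on $[n,\overline{n}]$ is a nonempty collection $\mathcal{F}$ of admissible sets of size $n$ (feasible sets) such that $\operatorname{Conv}\{e_B:B\in\mathcal{F}\}$ has all edges parallel to some $e_i$ or $e_i\pm e_j$. Its rank function is $g_D(S)=\max_{B\in\mathcal{F}}(|S\cap B|-|\overline{S}\cap B|)$. (It is a known fact that the collection $\{S\cap B:B\in\mathcal{F},|S\cap B|=r\}$ is the set of bases of a matroid on $S$.) $\operatorname{rk}_M$ denotes the matroid rank function. *)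

theory Defs
  imports "HOL-Analysis.Analysis"
begin

text \<open>The ground set [n, n-bar] is modelled as the type 'n \<times> bool with n = CARD('n):
  (i, True) stands for i and (i, False) for i-bar.\<close>

definition bar :: "'n \<times> bool \<Rightarrow> 'n \<times> bool" where
  "bar a = (fst a, \<not> snd a)"

definition admissible :: "('n \<times> bool) set \<Rightarrow> bool" where
  "admissible S \<longleftrightarrow> (\<forall>i. \<not> ((i, True) \<in> S \<and> (i, False) \<in> S))"

definition evec :: "('n::finite) \<times> bool \<Rightarrow> real ^ 'n" where
  "evec a = (if snd a then axis (fst a) 1 else - axis (fst a) 1)"

definition eset :: "('n::finite \<times> bool) set \<Rightarrow> real ^ 'n" where
  "eset S = (\<Sum>a\<in>S. evec a)"

definition allowed_direction :: "real ^ ('n::finite) \<Rightarrow> bool" where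
  "allowed_direction d \<longleftrightarrow>
     (\<exists>c i. d = c *\<^sub>R axis i 1) \<or>
     (\<exists>c i j. i \<noteq> j \<and> (d = c *\<^sub>R (axis i 1 + axis j 1) \<or> d = c *\<^sub>R (axis i 1 - axis j 1)))"

text \<open>Edges of the polytope: one-dimensional faces, i.e. faces that are nondegenerate segments.\<close>
definition delta_matroid :: "('n::finite \<times> bool) set set \<Rightarrow> bool" where
  "delta_matroid F \<longleftrightarrow>
     F \<noteq> {} \<and>
     (\<forall>B\<in>F. admissible B \<and> card B = CARD('n)) \<and>
     (\<forall>u v. u \<noteq> v \<and> closed_segment u v face_of convex hull (eset ` F)
            \<longrightarrow> allowed_direction (v - u))"

definition delta_rank :: "('n::finite \<times> bool) set set \<Rightarrow> ('n \<times> bool) set \<Rightarrow> int" where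
  "delta_rank F S = Max ((\<lambda>B. int (card (S \<inter> B)) - int (card (bar ` S \<inter> B))) ` F)"

definition matroid_rank :: "'a set set \<Rightarrow> 'a set \<Rightarrow> nat" where
  "matroid_rank Bs T = Max {card I | I. I \<subseteq> T \<and> (\<exists>X\<in>Bs. I \<subseteq> X)}"

end

theory Submission
  imports Defs
begin

lemma edge_lowdim:
  fixes P :: "'a::euclidean_space set"
  assumes "polytope P" "aff_dim P \<le> 1" "v extreme_point_of P" "P \<noteq> {v}"
  shows "\<exists>u. u \<noteq> v \<and> closed_segment v u face_of P"
proof -
  obtain n where "n simplex P" using polytope_lowdim_imp_simplex assms by blast
  then obtain C where C: "\<not> affine_dependent C" "int (card C) = n + 1" "P = convex hull C"
    unfolding simplex_def by blast
  have fin: "finite C" using C(1) aff_independent_finite by blast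
  have "v extreme_point_of convex hull C" using assms(3) C(3) by simp
  then have vC: "v \<in> C" by (rule extreme_point_of_convex_hull)
  have "aff_dim P = aff_dim C" using C(3) by (simp add: aff_dim_convex_hull)
  moreover have "int (card C) = aff_dim C + 1" using aff_dim_affine_independent[OF C(1)] by simp
  ultimately have "aff_dim P = int (card C) - 1" by simp
  then have cC: "card C \<le> 2" using assms(2) by linarith
  have "C \<noteq> {v}"
  proof
    assume "C = {v}"
    then have "P = {v}" using C(3) by simp
    then show False using assms(4) by blast
  qed
  then obtain u where u: "u \<in> C" "u \<noteq> v" using vC by blast
  have "C = {v, u}"
  proof -
    have "{v,u} \<subseteq> C" using u vC by auto
    moreover have "card {v,u} = 2" using u by auto
    ultimately show ?thesis using cC fin by (metis card_seteq)
  qed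
  then have "P = convex hull {v,u}" using C(3) by simp
  then have "P = closed_segment v u" by (simp add: segment_convex_hull)
  then have "closed_segment v u face_of P" by (simp add: face_of_refl)
  then show ?thesis using u by blast
qed

lemma edge_exists_aux:
  fixes v :: "'a::euclidean_space"
  shows "\<forall>P. polytope P \<longrightarrow> aff_dim P \<le> int m \<longrightarrow> v extreme_point_of P \<longrightarrow> P \<noteq> {v}
           \<longrightarrow> (\<exists>u. u \<noteq> v \<and> closed_segment v u face_of P)"
proof (induction m)
  case 0
  then show ?case using edge_lowdim by force
next
  case (Suc m)
  show ?case
  proof (intro allI impI)
    fix P :: "'a set"
    assume P: "polytope P" "aff_dim P \<le> int (Suc m)" "v extreme_point_of P" "P \<noteq> {v}"
    show "\<exists>u. u \<noteq> v \<and> closed_segment v u face_of P"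
    proof (cases "aff_dim P \<le> 1")
      case True
      then show ?thesis using edge_lowdim P by blast
    next
      case False
      have vP: "v \<in> P" using P(3) extreme_point_of_def by blast
      have "v \<notin> rel_interior P" using extreme_point_not_in_REL_INTERIOR P by blast
      moreover have "closed P" using P(1) polytope_imp_closed by blast
      ultimately have "v \<in> rel_frontier P" using vP by (simp add: rel_frontier_def)
      moreover have "polyhedron P" using P(1) polytope_imp_polyhedron by blast
      ultimately obtain F where F: "F facet_of P" "v \<in> F"
        using rel_frontier_of_polyhedron by blast
      have Ff: "F face_of P" using F(1) facet_of_imp_face_of by blast
      have Fa: "aff_dim F = aff_dim P - 1" using F(1) facet_of_def by blast
      have "polytope F" using face_of_polytope_polytope P(1) Ff by blast
      moreover have "aff_dim F \<le> int m" using Fa P(2) by simp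
      moreover have "v extreme_point_of F" using extreme_point_of_face Ff F(2) P(3) by blast
      moreover have "F \<noteq> {v}" using Fa False by auto
      ultimately obtain u where "u \<noteq> v" "closed_segment v u face_of F" using Suc.IH by blast
      then show ?thesis using Ff face_of_trans by blast
    qed
  qed
qed

lemma edge_exists:
  fixes P :: "'a::euclidean_space set"
  assumes "polytope P" "v extreme_point_of P" "P \<noteq> {v}"
  shows "\<exists>u. u \<noteq> v \<and> closed_segment v u face_of P"
proof -
  have "aff_dim P \<le> int (nat (aff_dim P))" by simp
  then show ?thesis using edge_exists_aux assms by blast
qed

lemma exposed_singleton:
  fixes V :: "'a::euclidean_space set"
  assumes "finite V" "v \<in> V" "\<forall>x\<in>V. x \<noteq> v \<longrightarrow> a \<bullet> x < a \<bullet> v"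
  shows "v extreme_point_of convex hull V"
proof -
  have le: "\<And>y. y \<in> convex hull V \<Longrightarrow> a \<bullet> y \<le> a \<bullet> v"
  proof -
    fix y assume "y \<in> convex hull V"
    moreover have "V \<subseteq> {y. a \<bullet> y \<le> a \<bullet> v}"
    proof
      fix x assume "x \<in> V"
      show "x \<in> {y. a \<bullet> y \<le> a \<bullet> v}"
      proof (cases "x = v")
        case True then show ?thesis by simp
      next
        case False
        then have "a \<bullet> x < a \<bullet> v" using assms(3) \<open>x \<in> V\<close> by blast
        then show ?thesis by simp
      qed
    qed
    then have "convex hull V \<subseteq> {y. a \<bullet> y \<le> a \<bullet> v}"
      by (rule hull_minimal) (rule convex_halfspace_le)
    ultimately show "a \<bullet> y \<le> a \<bullet> v" by blast
  qed
  let ?F = "convex hull V \<inter> {y. a \<bullet> y = a \<bullet> v}"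
  have Ff: "?F face_of convex hull V"
    by (rule face_of_Int_supporting_hyperplane_le) (auto simp: le)
  obtain T where T: "T \<subseteq> V" "?F = convex hull T"
    using face_of_convex_hull_subset[OF finite_imp_compact[OF assms(1)] Ff] by blast
  have TF: "T \<subseteq> ?F" unfolding T(2) by (rule hull_subset)
  have Tv: "x = v" if "x \<in> T" for x
  proof -
    have "x \<in> V" "a \<bullet> x = a \<bullet> v" using that T(1) TF by auto
    then show ?thesis using assms(3) by (metis less_irrefl)
  qed
  have "v \<in> convex hull V" using assms(2) by (rule hull_inc)
  then have vF: "v \<in> ?F" by simp
  have "T \<noteq> {}"
  proof
    assume "T = {}"
    then have "?F = {}" using T(2) by simp
    then show False using vF by blast
  qed
  then have "T = {v}" using Tv by blast
  then have "?F = {v}" using T(2) by simp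
  then show ?thesis using Ff face_of_singleton by metis
qed

lemma improve:
  fixes V :: "'a::euclidean_space set"
  assumes fin: "finite V" and vV: "v \<in> V" and ex: "\<forall>x\<in>V. x \<noteq> v \<longrightarrow> a \<bullet> x < a \<bullet> v"
    and wV: "w \<in> V" and cw: "c \<bullet> w > c \<bullet> v"
  shows "\<exists>u\<in>V. c \<bullet> u > c \<bullet> v \<and> u \<noteq> v \<and> closed_segment v u face_of convex hull V"
proof -
  define W where "W = {x\<in>V. c \<bullet> x > c \<bullet> v}"
  define t where "t x = (a \<bullet> v - a \<bullet> x) / (c \<bullet> x - c \<bullet> v)" for x
  have Wf: "finite W" "W \<noteq> {}" using fin wV cw by (auto simp: W_def)
  define ts where "ts = Min (t ` W)"
  have "ts \<in> t ` W" unfolding ts_def using Wf by (intro Min_in) auto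
  then obtain x0 where x0: "x0 \<in> W" "t x0 = ts" by auto
  have tpos: "t x > 0" if "x \<in> W" for x
  proof -
    have "x \<noteq> v" "x \<in> V" "c \<bullet> x > c \<bullet> v" using that by (auto simp: W_def)
    then show ?thesis using ex unfolding t_def by (auto intro!: divide_pos_pos)
  qed
  have tsle: "ts \<le> t x" if "x \<in> W" for x using Wf that unfolding ts_def by auto
  have tspos: "ts > 0" using tpos x0 by auto
  define b where "b = a + ts *\<^sub>R c"
  have bV: "b \<bullet> x \<le> b \<bullet> v \<and> (b \<bullet> x = b \<bullet> v \<longrightarrow> x = v \<or> c \<bullet> x > c \<bullet> v)" if "x \<in> V" for x
  proof (cases "c \<bullet> x > c \<bullet> v")
    case True
    then have "x \<in> W" using that by (auto simp: W_def)
    then have "ts \<le> (a \<bullet> v - a \<bullet> x) / (c \<bullet> x - c \<bullet> v)" using tsle t_def by auto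
    then have "ts * (c \<bullet> x - c \<bullet> v) \<le> a \<bullet> v - a \<bullet> x" using True by (simp add: le_divide_eq)
    then show ?thesis using True by (simp add: b_def inner_add_left algebra_simps)
  next
    case False
    show ?thesis
    proof (cases "x = v")
      case True then show ?thesis by simp
    next
      case xv: False
      then have "a \<bullet> x < a \<bullet> v" using ex that by blast
      moreover have "ts * (c \<bullet> x) \<le> ts * (c \<bullet> v)" using False tspos by (simp add: mult_left_mono)
      ultimately show ?thesis by (simp add: b_def inner_add_left)
    qed
  qed
  have le: "b \<bullet> y \<le> b \<bullet> v" if "y \<in> convex hull V" for y
  proof -
    have "V \<subseteq> {y. b \<bullet> y \<le> b \<bullet> v}" using bV by blast
    then have "convex hull V \<subseteq> {y. b \<bullet> y \<le> b \<bullet> v}"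
      by (rule hull_minimal) (rule convex_halfspace_le)
    then show ?thesis using that by blast
  qed
  let ?G = "convex hull V \<inter> {y. b \<bullet> y = b \<bullet> v}"
  have Gf: "?G face_of convex hull V"
    by (rule face_of_Int_supporting_hyperplane_le) (auto simp: le)
  obtain T where T: "T \<subseteq> V" "?G = convex hull T"
    using face_of_convex_hull_subset[OF finite_imp_compact[OF fin] Gf] by blast
  have x0V: "x0 \<in> V" "c \<bullet> x0 > c \<bullet> v" using x0 by (auto simp: W_def)
  have "ts * (c \<bullet> x0 - c \<bullet> v) = a \<bullet> v - a \<bullet> x0" using x0 x0V unfolding t_def by auto
  then have "b \<bullet> x0 = b \<bullet> v" by (simp add: b_def inner_add_left algebra_simps)
  moreover have "x0 \<in> convex hull V" using x0V(1) by (rule hull_inc)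
  ultimately have x0G: "x0 \<in> ?G" by simp
  have "v \<in> convex hull V" using vV by (rule hull_inc)
  then have vG: "v \<in> ?G" by simp
  have x0v: "x0 \<noteq> v" using x0V by auto
  have "finite T" using T(1) fin finite_subset by blast
  then have "polytope ?G" using T(2) polytope_def by blast
  moreover have "v extreme_point_of ?G"
    using exposed_singleton[OF fin vV ex] extreme_point_of_face[OF Gf] vG by blast
  moreover have "?G \<noteq> {v}" using x0G x0v by blast
  ultimately obtain u where u: "u \<noteq> v" "closed_segment v u face_of ?G" using edge_exists by blast
  have "u extreme_point_of ?G" using segment_face_of(2)[OF u(2)] .
  then have uT: "u \<in> T" using T(2) extreme_point_of_convex_hull by metis
  have "T \<subseteq> ?G" unfolding T(2) by (rule hull_subset)
  then have uG: "u \<in> ?G" using uT by blast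
  have "u \<in> V" using uT T(1) by blast
  moreover have "c \<bullet> u > c \<bullet> v" using bV[OF \<open>u \<in> V\<close>] uG u(1) by auto
  moreover have "closed_segment v u face_of convex hull V" using u(2) Gf face_of_trans by blast
  ultimately show ?thesis using u(1) by blast
qed

lemma complete:
  fixes B :: "('n::finite \<times> bool) set"
  assumes adm: "admissible B" and cardB: "card B = CARD('n)"
  shows "(i, b) \<in> B \<longleftrightarrow> b = ((i, True) \<in> B)"
proof -
  have inj: "inj_on fst B"
  proof (rule inj_onI)
    fix x y assume xy: "x \<in> B" "y \<in> B" "fst x = fst y"
    show "x = y"
    proof (rule ccontr)
      assume "x \<noteq> y"
      then have "snd x \<noteq> snd y" using xy(3) by (simp add: prod_eq_iff)
      then have "(fst x, True) \<in> B \<and> (fst x, False) \<in> B" using xy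
        by (cases "snd x") (metis prod.collapse)+
      then show False using adm unfolding admissible_def by blast
    qed
  qed
  have "card (fst ` B) = CARD('n)" using card_image[OF inj] cardB by simp
  then have "fst ` B = UNIV" by (intro card_eq_UNIV_imp_eq_UNIV) auto
  then have "i \<in> fst ` B" by simp
  then obtain x where x: "x \<in> B" "i = fst x" by blast
  then have "(i, snd x) \<in> B" by simp
  then show ?thesis using adm unfolding admissible_def by (cases b; cases "snd x") auto
qed

definition sg :: "bool \<Rightarrow> real" where "sg b = (if b then 1 else -1)"

lemma evec_nth: "evec a $ k = (if fst a = k then sg (snd a) else 0)"
  unfolding evec_def sg_def axis_def by auto

lemma eset_nth:
  fixes S X :: "('n::finite \<times> bool) set"
  assumes cS: "\<And>i b. (i, b) \<in> S \<longleftrightarrow> b = ((i, True) \<in> S)" and XS: "X \<subseteq> S"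
  shows "eset X $ k = (if (k, (k, True) \<in> S) \<in> X then sg ((k, True) \<in> S) else 0)"
proof -
  define s where "s = (k, (k, True) \<in> S)"
  have "eset X $ k = (\<Sum>a\<in>X. evec a $ k)" unfolding eset_def by simp
  also have "\<dots> = (\<Sum>a\<in>X. if a = s then sg (snd s) else 0)"
  proof (rule sum.cong[OF refl])
    fix a assume "a \<in> X"
    then have "a \<in> S" using XS by blast
    then have "snd a = ((fst a, True) \<in> S)" using cS[of "fst a" "snd a"] by simp
    then show "evec a $ k = (if a = s then sg (snd s) else 0)"
      unfolding s_def by (cases a) (auto simp: evec_nth)
  qed
  also have "\<dots> = (if s \<in> X then sg (snd s) else 0)" by (simp add: sum.delta)
  finally show ?thesis unfolding s_def by simp
qed

lemma eset_nth_self: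
  fixes B :: "('n::finite \<times> bool) set"
  assumes cB: "\<And>i b. (i, b) \<in> B \<longleftrightarrow> b = ((i, True) \<in> B)"
  shows "eset B $ k = sg ((k, True) \<in> B)"
proof -
  have "(k, (k, True) \<in> B) \<in> B" using cB[of k "(k, True) \<in> B"] by simp
  then show ?thesis using eset_nth[OF cB subset_refl, of k] by simp
qed

lemma inner_evec_eset:
  fixes B :: "('n::finite \<times> bool) set"
  assumes cB: "\<And>i b. (i, b) \<in> B \<longleftrightarrow> b = ((i, True) \<in> B)"
  shows "evec a \<bullet> eset B = (if a \<in> B then 1 else -1)"
proof -
  obtain i b where a: "a = (i, b)" by (cases a)
  have e: "evec a \<bullet> x = sg (snd a) * x $ fst a" for x
    unfolding evec_def sg_def by (auto simp: inner_axis')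
  have "evec a \<bullet> eset B = sg b * sg ((i, True) \<in> B)"
    using e eset_nth_self[OF cB] a by simp
  moreover have "a \<in> B \<longleftrightarrow> b = ((i, True) \<in> B)" using cB[of i b] a by simp
  ultimately show ?thesis by (cases b; cases "(i, True) \<in> B") (auto simp: sg_def)
qed

lemma inner_eset:
  fixes B X :: "('n::finite \<times> bool) set"
  assumes cB: "\<And>i b. (i, b) \<in> B \<longleftrightarrow> b = ((i, True) \<in> B)"
  shows "eset X \<bullet> eset B = 2 * real (card (X \<inter> B)) - real (card X)"
proof -
  have "eset X \<bullet> eset B = (\<Sum>a\<in>X. evec a \<bullet> eset B)" unfolding eset_def by (simp add: inner_sum_left)
  also have "\<dots> = (\<Sum>a\<in>X. if a \<in> B then 1 else -1)" using inner_evec_eset[OF cB] by simp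
  also have "\<dots> = real (card (X \<inter> B)) - real (card (X - B))"
    by (simp add: sum.If_cases Diff_eq)
  also have "card (X - B) = card X - card (X \<inter> B)" by (simp add: card_Diff_subset_Int)
  also have "real (card X - card (X \<inter> B)) = real (card X) - real (card (X \<inter> B))"
    by (simp add: card_mono of_nat_diff)
  finally show ?thesis by simp
qed

lemma card_bar:
  fixes B T :: "('n::finite \<times> bool) set"
  assumes cB: "\<And>i b. (i, b) \<in> B \<longleftrightarrow> b = ((i, True) \<in> B)"
  shows "int (card (bar ` T \<inter> B)) = int (card T) - int (card (T \<inter> B))"
proof -
  have key: "bar a \<in> B \<longleftrightarrow> a \<notin> B" for a
  proof -
    obtain i b where a: "a = (i, b)" by (cases a)
    have "bar a = (i, \<not> b)" using a by (simp add: bar_def)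
    then show ?thesis using cB[of i b] cB[of i "\<not> b"] a by auto
  qed
  have "bar ` T \<inter> B = bar ` (T - B)" using key by auto
  moreover have "inj_on bar (T - B)" by (rule inj_onI) (auto simp: bar_def prod_eq_iff)
  ultimately have "card (bar ` T \<inter> B) = card (T - B)" by (simp add: card_image)
  also have "\<dots> = card T - card (T \<inter> B)" by (simp add: card_Diff_subset_Int)
  finally show ?thesis by (simp add: card_mono of_nat_diff)
qed

lemma allowed_supp:
  fixes d :: "real ^ 'n::finite"
  assumes ad: "allowed_direction d"
  shows "\<exists>i j. \<forall>k. k \<noteq> i \<and> k \<noteq> j \<longrightarrow> d $ k = 0"
proof -
  from ad consider (a) c i where "d = c *\<^sub>R axis i 1"
    | (b) c i j where "d = c *\<^sub>R (axis i 1 + axis j 1)"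
    | (c) c i j where "d = c *\<^sub>R (axis i 1 - axis j 1)"
    unfolding allowed_direction_def by blast
  then show ?thesis
  proof cases
    case a then show ?thesis by (intro exI[of _ i]) (auto simp: axis_def)
  next
    case b then show ?thesis by (intro exI[of _ i] exI[of _ j]) (auto simp: axis_def)
  next
    case c then show ?thesis by (intro exI[of _ i] exI[of _ j]) (auto simp: axis_def)
  qed
qed

lemma sign_lemma:
  fixes d s t :: "real ^ 'n::finite"
  assumes ad: "allowed_direction d"
    and p: "\<And>k. s $ k * d $ k \<in> {-2, 0, 2}"
    and tI: "\<And>k. t $ k * d $ k = (if k \<in> I then s $ k * d $ k else 0)"
    and pos: "t \<bullet> d > 0"
  shows "s \<bullet> d \<ge> 0"
proof -
  obtain i j where supp: "\<And>k. k \<noteq> i \<Longrightarrow> k \<noteq> j \<Longrightarrow> d $ k = 0"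
    using allowed_supp[OF ad] by blast
  define q where "q k = s $ k * d $ k" for k
  have sd: "s \<bullet> d = (\<Sum>k\<in>{i, j}. q k)"
    unfolding inner_vec_def q_def inner_real_def using supp
    by (intro sum.mono_neutral_right) auto
  have "t \<bullet> d = (\<Sum>k\<in>UNIV. if k \<in> I then q k else 0)"
    unfolding inner_vec_def inner_real_def q_def using tI by simp
  also have "\<dots> = (\<Sum>k\<in>{i, j}. if k \<in> I then q k else 0)"
    using supp unfolding q_def by (intro sum.mono_neutral_right) auto
  finally have td: "t \<bullet> d = (\<Sum>k\<in>{i, j}. if k \<in> I then q k else 0)" .
  have qv: "q k \<in> {-2, 0, 2}" for k unfolding q_def using p .
  show ?thesis
  proof (cases "i = j")
    case True
    then have e: "{i, j} = {j}" by simp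
    show ?thesis using sd td pos qv[of j] unfolding e by (auto split: if_splits)
  next
    case False
    then show ?thesis using sd td pos qv[of i] qv[of j] by (auto split: if_splits)
  qed
qed

theorem proposition2p8:
  fixes F :: "('n::finite \<times> bool) set set" and S T :: "('n \<times> bool) set"
  assumes "delta_matroid F"
    and "admissible S" and "card S = CARD('n)"
    and "T \<subseteq> S"
  shows "let r = Max ((\<lambda>B. card (S \<inter> B)) ` F);
             Bs = {S \<inter> B | B. B \<in> F \<and> card (S \<inter> B) = r}
         in real (matroid_rank Bs T) = (real_of_int (delta_rank F T) + real (card T)) / 2"
proof -
  define r where "r = Max ((\<lambda>B. card (S \<inter> B)) ` F)"
  define Bs where "Bs = {S \<inter> B | B. B \<in> F \<and> card (S \<inter> B) = r}"
  have Fne: "F \<noteq> {}" and Fadm: "\<And>B. B \<in> F \<Longrightarrow> admissible B \<and> card B = CARD('n)"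
    and Fedge: "\<And>u v. u \<noteq> v \<Longrightarrow> closed_segment u v face_of convex hull (eset ` F)
                 \<Longrightarrow> allowed_direction (v - u)"
    using assms(1) unfolding delta_matroid_def by blast+
  have cF: "\<And>B i b. B \<in> F \<Longrightarrow> (i, b) \<in> B \<longleftrightarrow> b = ((i, True) \<in> B)"
    using Fadm complete by blast
  have cS: "\<And>i b. (i, b) \<in> S \<longleftrightarrow> b = ((i, True) \<in> S)"
    using complete assms(2,3) by blast
  have finF: "finite F" by simp
  define Fr where "Fr = {B\<in>F. card (S \<inter> B) = r}"
  have "r \<in> (\<lambda>B. card (S \<inter> B)) ` F" unfolding r_def using finF Fne by (intro Max_in) auto
  then have Frne: "Fr \<noteq> {}" unfolding Fr_def by auto
  have rmax: "card (S \<inter> B) \<le> r" if "B \<in> F" for B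
    unfolding r_def using finF that by (intro Max_ge) auto
  define k where "k = Max ((\<lambda>B. card (T \<inter> B)) ` Fr)"
  have "k \<in> (\<lambda>B. card (T \<inter> B)) ` Fr" unfolding k_def using Frne by (intro Max_in) auto
  then obtain B0 where B0: "B0 \<in> Fr" "card (T \<inter> B0) = k" by auto
  have kmax: "card (T \<inter> B) \<le> k" if "B \<in> Fr" for B
    unfolding k_def using that by (intro Max_ge) auto
  have B0F: "B0 \<in> F" and B0r: "card (S \<inter> B0) = r" using B0(1) unfolding Fr_def by auto
  have key: "card (T \<inter> B) \<le> k" if BF: "B \<in> F" for B
  proof (rule ccontr)
    assume "\<not> card (T \<inter> B) \<le> k"
    then have gt: "card (T \<inter> B) > card (T \<inter> B0)" using B0 by simp
    define V where "V = eset ` F"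
    define v where "v = eset B0"
    have finV: "finite V" unfolding V_def by simp
    have vV: "v \<in> V" unfolding V_def v_def using B0F by blast
    have vv: "v \<bullet> v = real CARD('n)"
      unfolding v_def using inner_eset[OF cF[OF B0F], of B0] Fadm[OF B0F] by simp
    have ex: "\<forall>x\<in>V. x \<noteq> v \<longrightarrow> v \<bullet> x < v \<bullet> v"
    proof (intro ballI impI)
      fix x assume "x \<in> V" "x \<noteq> v"
      then obtain B' where B': "B' \<in> F" "x = eset B'" unfolding V_def by blast
      then have "B0 \<noteq> B'" using \<open>x \<noteq> v\<close> unfolding v_def by blast
      have "\<not> B0 \<subseteq> B'"
      proof
        assume "B0 \<subseteq> B'"
        moreover have "card B0 = card B'" using Fadm[OF B0F] Fadm[OF B'(1)] by simp
        ultimately have "B0 = B'" by (simp add: card_subset_eq)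
        then show False using \<open>B0 \<noteq> B'\<close> by blast
      qed
      then have "B0 \<inter> B' \<subset> B0" by blast
      then have "card (B0 \<inter> B') < card B0" by (simp add: psubset_card_mono)
      moreover have "v \<bullet> x = 2 * real (card (B0 \<inter> B')) - real (card B0)"
        unfolding v_def B'(2) using inner_eset[OF cF[OF B'(1)], of B0] by simp
      ultimately show "v \<bullet> x < v \<bullet> v" using vv Fadm[OF B0F] by simp
    qed
    have wV: "eset B \<in> V" unfolding V_def using BF by blast
    have cw: "eset T \<bullet> eset B > eset T \<bullet> v"
      unfolding v_def using inner_eset[OF cF[OF BF], of T] inner_eset[OF cF[OF B0F], of T] gt by simp
    obtain u where uV: "u \<in> V" and cu: "eset T \<bullet> u > eset T \<bullet> v" and uv: "u \<noteq> v"
      and seg: "closed_segment v u face_of convex hull V"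
      using improve[OF finV vV ex wV cw] by blast
    obtain B1 where B1: "B1 \<in> F" "u = eset B1" using uV unfolding V_def by blast
    have ad: "allowed_direction (u - v)" using Fedge[OF uv[symmetric]] seg unfolding V_def by blast
    have T1: "card (T \<inter> B1) > card (T \<inter> B0)"
      using cu unfolding B1(2) v_def using inner_eset[OF cF[OF B1(1)], of T] inner_eset[OF cF[OF B0F], of T] by simp
    have "card (S \<inter> B1) \<noteq> r"
    proof
      assume "card (S \<inter> B1) = r"
      then have "B1 \<in> Fr" unfolding Fr_def using B1 by blast
      then show False using kmax T1 B0(2) by fastforce
    qed
    then have "card (S \<inter> B1) < card (S \<inter> B0)" using rmax[OF B1(1)] B0r by simp
    then have "eset S \<bullet> u < eset S \<bullet> v"
      unfolding B1(2) v_def using inner_eset[OF cF[OF B1(1)], of S] inner_eset[OF cF[OF B0F], of S] by simp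
    then have sneg: "eset S \<bullet> (u - v) < 0" by (simp add: inner_diff_right)
    have tpos: "eset T \<bullet> (u - v) > 0" using cu by (simp add: inner_diff_right)
    define I where "I = {k. (k, (k, True) \<in> S) \<in> T}"
    have Sk: "eset S $ k = sg ((k, True) \<in> S)" for k using eset_nth_self[OF cS] .
    have Tk: "eset T $ k = (if k \<in> I then sg ((k, True) \<in> S) else 0)" for k
      using eset_nth[OF cS assms(4)] unfolding I_def by simp
    have dk: "(u - v) $ k = sg ((k, True) \<in> B1) - sg ((k, True) \<in> B0)" for k
      unfolding B1(2) v_def using eset_nth_self[OF cF[OF B1(1)]] eset_nth_self[OF cF[OF B0F]] by simp
    have p: "eset S $ k * (u - v) $ k \<in> {-2, 0, 2}" for k
      unfolding Sk dk by (simp add: sg_def)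
    have tI: "eset T $ k * (u - v) $ k = (if k \<in> I then eset S $ k * (u - v) $ k else 0)" for k
      unfolding Tk Sk by simp
    have "eset S \<bullet> (u - v) \<ge> 0" using sign_lemma[OF ad p tI tpos] .
    then show False using sneg by simp
  qed
  have fT: "int (card (T \<inter> B)) - int (card (bar ` T \<inter> B)) = 2 * int (card (T \<inter> B)) - int (card T)"
    if "B \<in> F" for B
    using card_bar[OF cF[OF that], of T] by simp
  have dr: "delta_rank F T = 2 * int k - int (card T)"
    unfolding delta_rank_def
  proof (rule Max_eqI)
    show "finite ((\<lambda>B. int (card (T \<inter> B)) - int (card (bar ` T \<inter> B))) ` F)" by simp
  next
    fix y assume "y \<in> (\<lambda>B. int (card (T \<inter> B)) - int (card (bar ` T \<inter> B))) ` F"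
    then obtain B where "B \<in> F" "y = int (card (T \<inter> B)) - int (card (bar ` T \<inter> B))" by blast
    then show "y \<le> 2 * int k - int (card T)" using fT key by fastforce
  next
    show "2 * int k - int (card T) \<in> (\<lambda>B. int (card (T \<inter> B)) - int (card (bar ` T \<inter> B))) ` F"
      using fT[OF B0F] B0(2) B0F by force
  qed
  have mr: "matroid_rank Bs T = k"
    unfolding matroid_rank_def
  proof (rule Max_eqI)
    have "{card I |I. I \<subseteq> T \<and> (\<exists>X\<in>Bs. I \<subseteq> X)} = card ` {I. I \<subseteq> T \<and> (\<exists>X\<in>Bs. I \<subseteq> X)}" by blast
    then show "finite {card I |I. I \<subseteq> T \<and> (\<exists>X\<in>Bs. I \<subseteq> X)}" by simp
  next
    fix y assume "y \<in> {card I |I. I \<subseteq> T \<and> (\<exists>X\<in>Bs. I \<subseteq> X)}"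
    then obtain I X where IX: "y = card I" "I \<subseteq> T" "X \<in> Bs" "I \<subseteq> X" by blast
    then obtain B where B: "B \<in> F" "X = S \<inter> B" unfolding Bs_def by blast
    have "I \<subseteq> T \<inter> B" using IX B by blast
    then have "card I \<le> card (T \<inter> B)" by (simp add: card_mono)
    then show "y \<le> k" using key[OF B(1)] IX(1) by simp
  next
    have "S \<inter> B0 \<in> Bs" unfolding Bs_def using B0F B0r by blast
    moreover have "T \<inter> B0 \<subseteq> S \<inter> B0" using assms(4) by blast
    ultimately show "k \<in> {card I |I. I \<subseteq> T \<and> (\<exists>X\<in>Bs. I \<subseteq> X)}" using B0(2) by blast
  qed
  have "card T \<le> card S" using assms(4) by (simp add: card_mono)
  show ?thesis unfolding Let_def r_def[symmetric] Bs_def[symmetric] mr dr by simp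
qed

end
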